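(* For every integer $r\ge 1$, $$\sum_{n=1}^{\infty}\frac{n4^n}{(2n-1)^2(2n+1)(4n+2r+1)}\frac{\binom{2n}{n}}{\binom{4n+2r}{2n+r}}=\frac{\sqrt{2}}{2}\sum_{k=0}^{r+1}\frac{(-1)^k}{(2k+1)2^{2r-k+1}}\binom{r+1}{k}\mathcal{B}(k)+\frac{\varphi(2r+1)}{2^{2r+3}}-\frac{1}{2^{3/2}}\sum_{k=0}^{r-1}\frac{(-1)^k}{(2k+1)2^{2r-k+1}}\binom{r-1}{k}\mathcal{B}(k),$$ where $\mathcal{B}(k)=\int_0^{1/2}\frac{t^k}{\sqrt{1-t}}\,\mathrm{d}t$ and $\varphi(2k+1)=\int_0^1 t^{2k+1}\sqrt{1+t^2}\,\mathrm{d}t$. *)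

theory Defs
  imports "HOL-Analysis.Analysis"
begin

definition calB :: "nat \<Rightarrow> real" where
  "calB k = integral {0..1/2} (\<lambda>t. t ^ k / sqrt (1 - t))"

definition varphi :: "nat \<Rightarrow> real" where
  "varphi m = integral {0..1} (\<lambda>t. t ^ m * sqrt (1 + t^2))"

end

theory Submission
  imports Defs
begin

definition ca :: "nat \<Rightarrow> real" where "ca m = real ((2*m) choose m) / 4^m"

lemma ca_Suc: "ca (Suc m) = ca m * (2*m+1) / (2*m+2)"
proof -
  have "real ((2*Suc m) choose Suc m) * (m+1) = 2*(2*m+1) * real ((2*m) choose m)"
  proof -
    have e: "2*Suc m = Suc (Suc (2*m))" by simp
    have "(Suc (Suc (2*m)) choose Suc m) * Suc m = Suc (Suc (2*m)) * (Suc (2*m) choose m)"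
      by (metis Suc_times_binomial_eq mult.commute)
    moreover have "(Suc (2*m) choose m) * Suc m = Suc (2*m) * ((2*m) choose m)"
    proof -
      have "(Suc (2*m) choose Suc m) * Suc m = Suc (2*m) * ((2*m) choose m)"
        by (metis Suc_times_binomial_eq mult.commute)
      moreover have "Suc (2*m) choose Suc m = Suc (2*m) choose m"
        using binomial_symmetric[of "Suc m" "Suc (2*m)"] by simp
      ultimately show ?thesis by simp
    qed
    ultimately have "(Suc (Suc (2*m)) choose Suc m) * Suc m * Suc m = Suc (Suc (2*m)) * Suc (2*m) * ((2*m) choose m)"
      by (metis mult.assoc)
    hence "(Suc (Suc (2*m)) choose Suc m) * Suc m * Suc m = 2 * Suc m * Suc (2*m) * ((2*m) choose m)"
      by (simp add: algebra_simps)
    hence "(Suc (Suc (2*m)) choose Suc m) * Suc m = 2 * Suc (2*m) * ((2*m) choose m)"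
      by (metis (no_types, lifting) mult.commute mult.left_commute nat.distinct(1) nat_mult_eq_cancel1 zero_less_Suc)
    hence "real ((Suc (Suc (2*m)) choose Suc m) * Suc m) = real (2 * Suc (2*m) * ((2*m) choose m))"
      by metis
    thus ?thesis unfolding e by (simp add: algebra_simps)
  qed
  then have "real ((2*Suc m) choose Suc m) = 2*(2*m+1) * real ((2*m) choose m) / (m+1)"
    by (simp add: field_simps del: binomial_Suc_Suc)
  note X = this
  have e: "ca (Suc m) = real ((2*Suc m) choose Suc m) / 4^(Suc m)" by (simp only: ca_def)
  show ?thesis apply (subst e) apply (subst X) unfolding ca_def
  proof -
    have q: "(4::real)^m > 0" by simp
    have m: "real m + 1 > 0" "2 * real m + 2 > 0" by linarith+
    show "2 * (2 * m + 1) * real ((2 * m) choose m) / (m + 1) / 4 ^ Suc m =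
      real ((2 * m) choose m) / 4 ^ m * (2 * m + 1) / (2 * m + 2)"
      using q m by (simp add: divide_simps) (simp add: algebra_simps)
  qed
qed

lemma ca_nonneg: "ca m \<ge> 0" by (simp add: ca_def)

lemma ca_le1: "ca m \<le> 1"
proof -
  have "(2*m) choose m \<le> 2^(2*m)" by (rule binomial_le_pow2)
  hence "real ((2*m) choose m) \<le> 4^m" by (metis of_nat_le_iff of_nat_numeral of_nat_power power_mult numeral_times_numeral semiring_norm(12) semiring_norm(13) mult_2 power2_eq_square) 
  thus ?thesis by (simp add: ca_def)
qed

lemma gchoose_half: "((-1/2::real) gchoose m) = (-1/4)^m * real ((2*m) choose m)"
proof (induction m)
  case 0 then show ?case by simp
next
  case (Suc m)
  define G where "G = (\<lambda>k. (-1/2::real) gchoose k)"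
  have h1: "fact (Suc m) * G (Suc m) = (\<Prod>i = 0..<Suc m. -1/2 - of_nat i)"
    unfolding G_def by (rule gbinomial_mult_fact)
  have h2: "fact m * G m = (\<Prod>i = 0..<m. -1/2 - of_nat i)"
    unfolding G_def by (rule gbinomial_mult_fact)
  have "fact (Suc m) * G (Suc m) = (fact m * G m) * (-1/2 - real m)"
    unfolding h1 h2 by simp
  hence "(real m + 1) * (fact m * G (Suc m)) = (fact m * G m) * (-1/2 - real m)"
    by (simp add: algebra_simps)
  hence "(real m + 1) * G (Suc m) = G m * (-1/2 - real m)"
    by (metis (no_types, lifting) fact_nonzero mult.left_commute mult.commute mult_left_cancel)
  hence g: "G (Suc m) = G m * (-1/2 - real m) / (real m + 1)"
    by (simp add: field_simps)
  have "G m = (-1/4)^m * ca m * 4^m" using Suc unfolding G_def ca_def by simp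
  hence "G (Suc m) = (-1/4)^m * ca m * 4^m * (-1/2 - real m) / (real m + 1)" using g by simp
  also have "\<dots> = (-1/4)^(Suc m) * ca (Suc m) * 4^(Suc m)" unfolding ca_Suc by (simp add: field_simps)
  also have "\<dots> = (-1/4)^(Suc m) * real ((2*Suc m) choose Suc m)" by (simp only: ca_def) simp
  finally show ?case unfolding G_def .
qed

lemma binom_series:
  fixes u :: real assumes "\<bar>u\<bar> < 1"
  shows "(\<lambda>m. ca m * u^(2*m)) sums (1 / sqrt (1 - u^2))"
proof -
  have u2: "u^2 < 1" using assms by (simp add: abs_square_less_1)
  have "\<bar>-(u^2)\<bar> < 1" using u2 by simp
  from gen_binomial_real[OF this, of "-1/2"]
  have "(\<lambda>n. ((-1/2) gchoose n) * (-(u^2))^n) sums (1 + -(u^2)) powr (-1/2)" .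
  moreover have "((-1/2) gchoose n) * (-(u^2))^n = ca n * u^(2*n)" for n
  proof -
    have "((-1/2) gchoose n) * (-(u^2))^n = real ((2*n) choose n) * ((-1/4) * (-(u^2)))^n"
      unfolding gchoose_half power_mult_distrib by simp
    also have "((-1/4) * (-(u^2)))^n = (u^2)^n / 4^n" by (simp add: power_divide)
    finally show ?thesis unfolding ca_def by (simp add: power_mult)
  qed
  moreover have "(1 + -(u^2)) powr (-1/2) = 1 / sqrt (1 - u^2)"
  proof -
    have "1 - u^2 > 0" using u2 by simp
    hence "(1 - u^2) powr (-1/2) = 1 / (1 - u^2) powr (1/2)"
      by (metis minus_divide_left powr_minus_divide)
    thus ?thesis using \<open>1 - u^2 > 0\<close> by (simp add: powr_half_sqrt)
  qed
  ultimately show ?thesis by simp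
qed

lemma series_deriv:
  fixes j :: nat and F :: "real \<Rightarrow> real" and s :: real
  assumes s: "\<bar>s\<bar> < 1" and F0: "F 0 = 0"
   and Fd: "\<And>x. \<bar>x\<bar> < 1 \<Longrightarrow> (F has_real_derivative x^(2*j) / sqrt(1-x^2)) (at x)"
  shows "(\<lambda>m. ca m * s^(2*m+2*j+1) / (2*m+2*j+1)) sums F s"
proof -
  define \<rho> where "\<rho> = (1+\<bar>s\<bar>)/2"
  have \<rho>: "\<bar>s\<bar> < \<rho>" "\<rho> < 1" "0 < \<rho>" using s by (auto simp: \<rho>_def)
  define S where "S = {-\<rho>..\<rho>}"
  define f where "f = (\<lambda>m x. ca m * x^(2*m+2*j+1) / (2*m+2*j+1))"
  define f' where "f' = (\<lambda>m (x::real). ca m * x^(2*m+2*j))"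
  have cS: "convex S" by (simp add: S_def)
  have der: "(f m has_field_derivative f' m x) (at x within S)" for m x
  proof -
    have "((\<lambda>x. ca m * x^(2*m+2*j+1) / (2*m+2*j+1)) has_field_derivative
           ca m * (real (2*m+2*j+1) * x^(2*m+2*j)) / (2*m+2*j+1)) (at x within S)"
      using DERIV_cdivide[OF DERIV_cmult[OF DERIV_pow[of "2*m+2*j+1" x S]], of "ca m" "real (2*m+2*j+1)"]
      by simp
    moreover have "ca m * (real (2*m+2*j+1) * x^(2*m+2*j)) / (2*m+2*j+1) = f' m x"
      unfolding f'_def by (simp add: field_simps)
    ultimately show ?thesis unfolding f_def by simp
  qed
  have unif: "uniformly_convergent_on S (\<lambda>n x. \<Sum>i<n. f' i x)"
  proof (rule Weierstrass_m_test')
    show "summable (\<lambda>n. (\<rho>^2)^n)" using \<rho> by (intro summable_geometric) (simp add: abs_square_less_1)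
    fix n x assume x: "x \<in> S"
    hence ax: "\<bar>x\<bar> \<le> \<rho>" by (auto simp: S_def)
    have "norm (f' n x) = ca n * \<bar>x\<bar>^(2*n+2*j)"
      unfolding f'_def using ca_nonneg by (simp add: abs_mult power_abs)
    also have "\<dots> \<le> 1 * \<rho>^(2*n+2*j)"
      using ca_le1 ca_nonneg ax by (intro mult_mono power_mono) auto
    also have "\<dots> \<le> \<rho>^(2*n)" using \<rho> by (simp add: power_decreasing)
    finally show "norm (f' n x) \<le> (\<rho>^2)^n" by (simp add: power_mult)
  qed
  have z0: "(0::real) \<in> S" using \<rho> by (simp add: S_def)
  have f0: "f m 0 = 0" for m unfolding f_def by simp
  have sm0: "summable (\<lambda>n. f n 0)" unfolding f0 by simp
  define T where "T = {-\<rho><..<\<rho>}"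
  have TS: "x \<in> interior S" if "x \<in> T" for x using that by (simp add: S_def T_def)
  have key: "summable (\<lambda>n. f n x) \<and> ((\<lambda>x. \<Sum>n. f n x) has_field_derivative (\<Sum>n. f' n x)) (at x)"
    if "x \<in> T" for x
    using has_field_derivative_series'[OF cS der unif z0 sm0 TS[OF that]] by blast
  have xT: "\<bar>x\<bar> < 1" if "x \<in> T" for x using that \<rho> by (auto simp: T_def)
  have sf': "(\<Sum>n. f' n x) = x^(2*j) / sqrt (1-x^2)" if "x \<in> T" for x
  proof -
    have "(\<lambda>n. x^(2*j) * (ca n * x^(2*n))) sums (x^(2*j) * (1 / sqrt (1-x^2)))"
      by (intro sums_mult binom_series xT that)
    moreover have "(\<lambda>n. x^(2*j) * (ca n * x^(2*n))) = (\<lambda>n. f' n x)"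
      unfolding f'_def by (auto simp: power_add mult_ac)
    ultimately show ?thesis by (simp add: sums_iff)
  qed
  have "\<exists>c. \<forall>x\<in>T. (\<lambda>x. (\<Sum>n. f n x) - F x) x = c"
  proof (rule has_field_derivative_zero_constant)
    show "convex T" by (simp add: T_def)
    fix x assume x: "x \<in> T"
    have "((\<lambda>x. (\<Sum>n. f n x) - F x) has_field_derivative (x^(2*j) / sqrt (1-x^2) - x^(2*j) / sqrt (1-x^2))) (at x)"
      using key[OF x] sf'[OF x] Fd[OF xT[OF x]] by (intro derivative_intros) auto
    thus "((\<lambda>x. (\<Sum>n. f n x) - F x) has_field_derivative 0) (at x within T)"
      by (simp add: has_field_derivative_at_within)
  qed
  then obtain c where c: "\<And>x. x \<in> T \<Longrightarrow> (\<Sum>n. f n x) - F x = c" by auto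
  have "0 \<in> T" using \<rho> by (simp add: T_def)
  from c[OF this] have "c = 0" using F0 by (simp add: f0)
  have sT: "s \<in> T" using \<rho> by (auto simp: T_def)
  from c[OF sT] \<open>c = 0\<close> have "(\<Sum>n. f n s) = F s" by simp
  with key[OF sT] have "(\<lambda>n. f n s) sums F s" by (simp add: sums_iff)
  thus ?thesis unfolding f_def .
qed


lemma sqrt_deriv: assumes "\<bar>x::real\<bar> < 1"
  shows "((\<lambda>x. sqrt (1 - x^2)) has_real_derivative (- x / sqrt (1 - x^2))) (at x)"
proof -
  have x2: "1 - x^2 > 0" using assms by (simp add: abs_square_less_1)
  have a: "((\<lambda>x. 1 - x^2) has_real_derivative (- (2*x))) (at x)"
    using DERIV_diff[OF DERIV_const DERIV_pow[of 2 x UNIV]] by simp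
  have "((\<lambda>x. sqrt (1 - x^2)) has_real_derivative (inverse (sqrt (1 - x^2)) / 2 * (- (2*x)))) (at x)"
    by (rule DERIV_chain2[OF DERIV_real_sqrt[OF x2] a])
  moreover have "inverse (sqrt (1 - x^2)) / 2 * (- (2*x)) = - x / sqrt (1 - x^2)"
    by (simp add: inverse_eq_divide)
  ultimately show ?thesis by (simp only:)
qed
lemma W_deriv: assumes x: "\<bar>x::real\<bar> < 1"
  shows "((\<lambda>x. (arcsin x - x * sqrt (1 - x^2)) / 2) has_real_derivative (x^2 / sqrt (1 - x^2))) (at x)"
proof -
  have x2: "1 - x^2 > 0" using x by (simp add: abs_square_less_1)
  define q where "q = sqrt (1 - x^2)"
  have q: "q > 0" "q^2 = 1 - x^2" using x2 by (auto simp: q_def)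
  have a: "(arcsin has_real_derivative 1 / q) (at x)"
    using DERIV_arcsin[of x] x by (auto simp: q_def divide_inverse abs_less_iff)
  have b: "((\<lambda>x. x * sqrt (1 - x^2)) has_real_derivative (1 * q + x * (- x / q))) (at x)"
    using DERIV_mult[OF DERIV_ident sqrt_deriv[OF x]] by (simp add: q_def)
  have c: "((\<lambda>x. (arcsin x - x * sqrt (1 - x^2)) / 2) has_real_derivative ((1/q - (1 * q + x * (- x / q))) / 2)) (at x)"
    by (rule DERIV_cdivide[OF DERIV_diff[OF a b]])
  have "1/q - (1 * q + x * (- x / q)) = (1 + x^2 - q^2)/q"
    using q(1) by (simp add: field_simps power2_eq_square)
  also have "1 + x^2 - q^2 = 2 * x^2" using q(2) by linarith
  finally have "(1/q - (1 * q + x * (- x / q))) / 2 = x^2 / q" by (simp only:) simp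
  with c have "((\<lambda>x. (arcsin x - x * sqrt (1 - x^2)) / 2) has_real_derivative (x^2 / q)) (at x)" by (simp only:)
  thus ?thesis unfolding q_def .
qed

lemma arcsin_series: assumes s: "\<bar>s\<bar> < 1"
  shows "(\<lambda>m. ca m * s^(2*m+1) / (2*m+1)) sums arcsin s"
proof -
  have "(\<lambda>m. ca m * s^(2*m+2*0+1) / (2*m+2*0+1)) sums arcsin s"
  proof (rule series_deriv[OF s])
    fix x :: real assume "\<bar>x\<bar> < 1"
    thus "(arcsin has_real_derivative x^(2*0) / sqrt (1 - x^2)) (at x)"
      using DERIV_arcsin[of x] by (simp add: abs_less_iff inverse_eq_divide)
  qed simp
  thus ?thesis by simp
qed

lemma W_series: assumes s: "\<bar>s\<bar> < 1"
  shows "(\<lambda>m. ca m * s^(2*m+3) / (2*m+3)) sums ((arcsin s - s * sqrt (1 - s^2)) / 2)"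
proof -
  have "(\<lambda>m. ca m * s^(2*m+2*1+1) / (2*m+2*1+1)) sums ((\<lambda>x. (arcsin x - x * sqrt (1 - x^2)) / 2) s)"
  proof (rule series_deriv[OF s])
    fix x :: real assume "\<bar>x\<bar> < 1"
    thus "((\<lambda>x. (arcsin x - x * sqrt (1 - x^2)) / 2) has_real_derivative x^(2*1) / sqrt (1 - x^2)) (at x)"
      using W_deriv[of x] by simp
  qed simp
  moreover have "\<And>m::nat. 2*m+2*1+1 = 2*m+3" by simp
  ultimately show ?thesis by (simp only:)
qed

definition Pcf :: "real \<Rightarrow> real" where
  "Pcf x = (x/4) * arcsin x - (arcsin x - x * sqrt (1 - x^2)) / (8 * x)"

lemma P_series: assumes "0 < s" "s < 1"
  shows "(\<lambda>m. ca m * s^(2*m+2) / (2*(2*m+1)*(2*m+3))) sums Pcf s"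
proof -
  have s: "\<bar>s\<bar> < 1" using assms by simp
  have "(\<lambda>m. (s/4) * (ca m * s^(2*m+1) / (2*m+1)) - (1/(4 * s)) * (ca m * s^(2*m+3) / (2*m+3)))
        sums ((s/4) * arcsin s - (1/(4 * s)) * ((arcsin s - s * sqrt (1 - s^2)) / 2))"
    by (intro sums_diff sums_mult arcsin_series W_series s)
  moreover have "(s/4) * (ca m * s^(2*m+1) / (2*m+1)) - (1/(4 * s)) * (ca m * s^(2*m+3) / (2*m+3))
     = ca m * s^(2*m+2) / (2*(2*m+1)*(2*m+3))" for m
  proof -
    have a: "real (2*m+1) > 0" "real (2*m+3) > 0" by auto
    have e1: "s^(2*m+3) = s * s^(2*m+2)" proof -
      have "2*m+3 = Suc (2*m+2)" by simp
      thus ?thesis by (simp only: power_Suc)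
    qed
    have e2: "s^(2*m+1) * s = s^(2*m+2)" using power_add[of s "2*m+1" 1] by simp
    define A where "A = ca m * s^(2*m+2)"
    define a where "a = real (2*m+1)"
    have ap: "a > 0" by (simp add: a_def)
    have l1: "(s/4) * (ca m * s^(2*m+1) / (2*m+1)) = A / (4*a)"
      unfolding A_def a_def e2[symmetric] by simp
    have l2: "(1/(4 * s)) * (ca m * s^(2*m+3) / (2*m+3)) = A / (4*(a+2))"
      unfolding A_def a_def e1 using assms by simp
    have l3: "A / (4*a) - A / (4*(a+2)) = A / (2*a*(a+2))"
      using ap by (simp add: divide_simps) (simp add: algebra_simps)
    have l4: "ca m * s^(2*m+2) / (2*(2*m+1)*(2*m+3)) = A / (2*a*(a+2))"
      unfolding A_def a_def by (simp add: algebra_simps)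
    show ?thesis unfolding l1 l2 l3 l4 ..
  qed
  moreover have "(s/4) * arcsin s - (1/(4 * s)) * ((arcsin s - s * sqrt (1 - s^2)) / 2) = Pcf s"
    unfolding Pcf_def using assms by (simp add: field_simps)
  ultimately show ?thesis by simp
qed

definition Jn :: "nat \<Rightarrow> real" where "Jn N = integral {0..1} (\<lambda>y::real. (1 - y^2)^N)"

lemma Jn_int: "((\<lambda>y::real. (1 - y^2)^N) has_integral Jn N) {0..1}"
  unfolding Jn_def by (intro integrable_integral integrable_continuous_interval continuous_intros)

lemma Jn_rec: "(2*N+3) * Jn (N+1) = (2*N+2) * Jn N"
proof -
  define F where "F = (\<lambda>y::real. y * (1 - y^2)^(N+1))"
  have der: "(F has_vector_derivative ((2*N+3) * (1 - y^2)^(N+1) - (2*N+2) * (1 - y^2)^N)) (at y within {0..1})"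
    for y :: real
  proof -
    have d: "(F has_real_derivative (1 * (1 - y^2)^(N+1) + (real (N+1) * ((- (2*y)) * (1 - y^2)^N)) * y)) (at y within {0..1})"
    proof -
      have a: "((\<lambda>y. 1 - y^2) has_real_derivative (- (2*y))) (at y within {0..1})"
        using DERIV_diff[OF DERIV_const DERIV_pow[of 2 y "{0..1}"]] by simp
      have b: "((\<lambda>y. (1 - y^2)^(N+1)) has_real_derivative (real (N+1) * ((- (2*y)) * (1 - y^2)^N))) (at y within {0..1})"
        using DERIV_power[OF a, of "N+1"] by simp
      show ?thesis unfolding F_def by (rule DERIV_mult[OF DERIV_ident b])
    qed
    have e: "1 * (1 - y^2)^(N+1) + (real (N+1) * ((- (2*y)) * (1 - y^2)^N)) * y
        = (2*N+3) * (1 - y^2)^(N+1) - (2*N+2) * (1 - y^2)^N"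
    proof -
      have "(1 - y^2)^(N+1) = (1 - y^2) * (1 - y^2)^N" by simp
      thus ?thesis by (simp add: algebra_simps power2_eq_square)
    qed
    show ?thesis using d unfolding e has_real_derivative_iff_has_vector_derivative .
  qed
  have I1: "((\<lambda>y. (2*N+3) * (1 - y^2)^(N+1) - (2*N+2) * (1 - y^2)^N) has_integral (F 1 - F 0)) {0..1::real}"
    by (rule fundamental_theorem_of_calculus[OF _ der]) simp
  have F0: "F 1 - F 0 = 0" by (simp add: F_def)
  have I2: "((\<lambda>y. (2*N+3) * (1 - y^2)^(N+1) - (2*N+2) * (1 - y^2)^N) has_integral
      ((2*N+3) * Jn (N+1) - (2*N+2) * Jn N)) {0..1::real}"
    by (intro has_integral_diff has_integral_mult_right Jn_int)
  have "(2*N+3) * Jn (N+1) - (2*N+2) * Jn N = 0" using has_integral_unique[OF I2 I1] F0 by simp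
  thus ?thesis by simp
qed

lemma ca_pos: "ca m > 0" by (simp add: ca_def)

lemma Jn_closed: "Jn N = 1 / ((2*real N+1) * ca N)"
proof (induction N)
  case 0
  have "Jn 0 = 1" unfolding Jn_def by simp
  thus ?case by (simp add: ca_def)
next
  case (Suc N)
  have h: "(2*real N+3) * Jn (Suc N) = (2*real N+2) * Jn N" using Jn_rec[of N] by simp
  have p: "2*real N+3 > 0" "2*real N+1 > 0" "2*real N+2 > 0" "ca N > 0" using ca_pos[of N] by auto
  have "Jn (Suc N) = (2*real N+2) * Jn N / (2*real N+3)" using h p by (simp add: field_simps)
  also have "\<dots> = (2*real N+2) / ((2*real N+3) * (2*real N+1) * ca N)" unfolding Suc using p by simp
  also have "\<dots> = 1 / ((2 * real (Suc N) + 1) * ca (Suc N))"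
    unfolding ca_Suc using p by (simp add: divide_simps) (simp add: algebra_simps)
  finally show ?case .
qed

definition tt :: "nat \<Rightarrow> nat \<Rightarrow> real" where
  "tt r m = (let n = m + 1 in
            (real n * 4 ^ n / ((2 * real n - 1)^2 * (2 * real n + 1) * (4 * real n + 2 * real r + 1)))
            * (real ((2*n) choose n) / real ((4*n + 2*r) choose (2*n + r))))"

definition hh :: "nat \<Rightarrow> nat \<Rightarrow> real \<Rightarrow> real" where
  "hh r m y = ca m / (2*(2*real m+1)*(2*real m+3)*4^r) * (1 - y^2)^(2*m+2+r)"

lemma Jn_pos: "Jn N > 0" using Jn_closed[of N] ca_pos[of N] by simp

lemma tt_eq: "tt r m = ca m / (2*(2*real m+1)*(2*real m+3)*4^r) * Jn (2*m+2+r)"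
proof -
  define n where "n = m + 1"
  define N where "N = 2*m+2+r"
  have N: "N = 2*n + r" "4*n+2*r = 2*N" "2*n+r = N" by (simp_all add: n_def N_def)
  have b1: "real ((4*n+2*r) choose (2*n+r)) = 4^N * ca N" unfolding N(2) N(3) ca_def by simp
  have b2: "real ((2*n) choose n) = 4^n * ca n" unfolding ca_def by simp
  have k0: "(2*real N+1) * ca N > 0" using ca_pos[of N] by simp
  have k: "ca N * ((2*real N+1) * Jn N) = 1" unfolding Jn_closed[of N] using k0 ca_pos[of N] by simp
  have k2: "(2*real N+1) * Jn N \<noteq> 0" using Jn_pos[of N] by simp
  have cN: "ca N = 1 / ((2*real N+1) * Jn N)" using k k2 by (simp add: eq_divide_eq)
  have cn: "ca n = ca m * (2*real m+1) / (2*real m+2)" unfolding n_def using ca_Suc[of m] by (simp add: add.commute)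
  have q: "(4::real)^N = 4^n * 4^n * 4^r" unfolding N(1) by (simp add: power_add power_mult mult_2)
  have e1: "2 * real n - 1 = 2*real m+1" "2*real n+1 = 2*real m+3" "4*real n + 2*real r + 1 = 2*real N+1"
    "real n = real m + 1"
    by (simp_all add: n_def N_def)
  have "tt r m = real n * 4 ^ n / ((2 * real n - 1)^2 * (2 * real n + 1) * (4 * real n + 2 * real r + 1))
            * (real ((2*n) choose n) / real ((4*n + 2*r) choose (2*n + r)))"
    unfolding tt_def n_def Let_def ..
  also have "\<dots> = real n * 4 ^ n / ((2*real m+1)^2 * (2*real m+3) * (2*real N+1))
            * (4^n * (ca m * (2*real m+1) / (2*real m+2)) / (4^n * 4^n * 4^r * (1 / ((2*real N+1) * Jn N))))"
    unfolding e1(1) e1(2) e1(3) b1 b2 cN cn q ..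
  also have "\<dots> = ca m / (2*(2*real m+1)*(2*real m+3)*4^r) * Jn N"
  proof -
    have p: "real m + 1 > 0" "2*real m+1 > 0" "2*real m+3 > 0" "2*real N+1 > 0" "(4::real)^n > 0" "(4::real)^r > 0" "Jn N > 0"
      using Jn_pos by auto
    have "2*real m+2 = 2*(real m+1)" by simp
    thus ?thesis unfolding e1(4) using p by (simp add: divide_simps) (simp add: algebra_simps power2_eq_square)
  qed
  finally show ?thesis unfolding N_def .
qed

lemma hh_int: "((hh r m) has_integral tt r m) {0..1}"
proof -
  have "((\<lambda>y. ca m / (2*(2*real m+1)*(2*real m+3)*4^r) * (1 - y^2)^(2*m+2+r)) has_integral
        (ca m / (2*(2*real m+1)*(2*real m+3)*4^r) * Jn (2*m+2+r))) {0..1}"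
    by (intro has_integral_mult_right Jn_int)
  thus ?thesis unfolding tt_eq hh_def .
qed

lemma summ_M: "summable (\<lambda>m::nat. 1 / ((2*real m+1)*(2*real m+3)))"
proof (rule summable_comparison_test')
  show "summable (\<lambda>n. inverse (real (Suc n) ^ 2))"
    using inverse_power_summable[of 2, where 'a=real] by (subst summable_Suc_iff) simp
  fix n :: nat
  have a: "real (Suc n) ^ 2 \<le> (2*real n+1)*(2*real n+3)" by (simp add: power2_eq_square algebra_simps)
  have b: "real (Suc n) ^ 2 > 0" by simp
  have "1 / ((2*real n+1)*(2*real n+3)) \<le> 1 / real (Suc n) ^ 2"
    using a b by (intro divide_left_mono) auto
  thus "norm (1 / ((2*real n+1)*(2*real n+3))) \<le> inverse (real (Suc n) ^ 2)"
    by (simp add: inverse_eq_divide)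
qed

lemma hh_bound: assumes "y \<in> {0..1::real}"
  shows "norm (hh r m y) \<le> 1 / ((2*real m+1)*(2*real m+3))"
proof -
  have y: "0 \<le> 1 - y^2" "1 - y^2 \<le> 1" using assms by (auto simp: power_le_one)
  have p0: "(1 - y^2)^(2*m+2+r) \<le> 1" by (rule power_le_one[OF y])
  have p00: "0 \<le> (1 - y^2)^(2*m+2+r)" by (rule zero_le_power[OF y(1)])
  have p1: "\<bar>(1 - y^2)^(2*m+2+r)\<bar> \<le> 1" using abs_of_nonneg[OF p00] p0 by linarith
  have d: "(2*real m+1)*(2*real m+3) > 0" by simp
  have q: "(1::real) \<le> 2 * 4^r" using one_le_power[of "4::real" r] by linarith
  have "norm (hh r m y) = ca m / (2*(2*real m+1)*(2*real m+3)*4^r) * \<bar>(1 - y^2)^(2*m+2+r)\<bar>"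
    unfolding hh_def using ca_nonneg[of m] by (simp add: abs_mult)
  also have "\<dots> \<le> ca m / (2*(2*real m+1)*(2*real m+3)*4^r) * 1"
    using p1 ca_nonneg[of m] by (intro mult_left_mono) auto
  also have "\<dots> \<le> 1 / ((2*real m+1)*(2*real m+3))"
  proof -
    have e: "ca m / (2*(2*real m+1)*(2*real m+3)*4^r) * 1 = ca m / (2*4^r) / ((2*real m+1)*(2*real m+3))"
      by (simp add: field_simps)
    have le: "ca m / (2*4^r) \<le> 1" using ca_le1[of m] ca_nonneg[of m] q
      by (simp add: divide_le_eq)
    have "ca m / (2*4^r) / ((2*real m+1)*(2*real m+3)) \<le> 1 / ((2*real m+1)*(2*real m+3))"
      by (rule divide_right_mono[OF le]) (use d in simp)
    then show ?thesis unfolding e .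
  qed
  finally show ?thesis .
qed

lemma interchange:
  assumes F: "(F2 has_integral R) {0..1}"
    and pw: "\<And>y. 0 < y \<Longrightarrow> y < 1 \<Longrightarrow> (\<lambda>m. hh r m y) sums F2 y"
  shows "(tt r) sums R"
proof -
  define g where "g y = (\<Sum>m. hh r m y)" for y
  have u: "uniform_limit {0..1} (\<lambda>n y. \<Sum>i<n. hh r i y) g sequentially"
    unfolding g_def by (rule Weierstrass_m_test[OF hh_bound summ_M])
  have c: "continuous_on {0..1} (\<lambda>y. \<Sum>i<n. hh r i y)" for n
    unfolding hh_def by (intro continuous_intros)
  obtain I J where I: "\<And>n. ((\<lambda>y. \<Sum>i<n. hh r i y) has_integral I n) {0..1}"
    and J: "(g has_integral J) {0..1}" and IJ: "(I \<longlonglongrightarrow> J)"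
    using uniform_limit_integral[OF u c] by auto
  have In: "I n = (\<Sum>i<n. tt r i)" for n
  proof -
    have "((\<lambda>y. \<Sum>i<n. hh r i y) has_integral (\<Sum>i<n. tt r i)) {0..1}"
      by (intro has_integral_sum hh_int) auto
    thus ?thesis using I[of n] by (rule has_integral_unique[rotated])
  qed
  have "(g has_integral R) {0..1}"
  proof (rule has_integral_spike_finite[OF _ _ F])
    show "finite {0::real, 1}" by simp
    fix y assume "y \<in> {0..1} - {0::real, 1}"
    hence "0 < y" "y < 1" by auto
    thus "g y = F2 y" unfolding g_def using pw sums_unique by metis
  qed
  hence "J = R" using J has_integral_unique by metis
  moreover have "I = (\<lambda>n. \<Sum>i<n. tt r i)" by (rule ext) (rule In)
  ultimately have "(\<lambda>n. \<Sum>i<n. tt r i) \<longlonglongrightarrow> R" using IJ by simp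
  thus ?thesis by (simp add: sums_def)
qed

lemma Mk_int: "((\<lambda>y::real. y^(2*k+1) / sqrt (2 - y^2)) has_integral (2^k / sqrt 2 * calB k)) {0..1}"
proof -
  define f where "f = (\<lambda>t::real. t^k / sqrt (1 - t))"
  have cf: "continuous_on {0..1/2} f" unfolding f_def
    by (intro continuous_intros) auto
  have "((\<lambda>y. y *\<^sub>R f (y^2/2)) has_integral integral {0^2/2..1^2/2} f) {0..1::real}"
  proof (rule has_integral_substitution[where c=0 and d="1/2"])
    show "(\<lambda>y::real. y^2/2) ` {0..1} \<subseteq> {0..1/2}"
      by (auto simp: power_le_one)
    show "continuous_on {0..1/2} f" by (rule cf)
    fix x :: real
    show "((\<lambda>y. y^2/2) has_real_derivative x) (at x within {0..1})"
      using DERIV_cdivide[OF DERIV_pow[of 2 x "{0..1}"], of 2] by simp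
  qed simp_all
  hence I: "((\<lambda>y. y * f (y^2/2)) has_integral calB k) {0..1::real}"
    by (simp add: calB_def f_def)
  have "((\<lambda>y. 2^k / sqrt 2 * (y * f (y^2/2))) has_integral (2^k / sqrt 2 * calB k)) {0..1::real}"
    by (rule has_integral_mult_right[OF I])
  moreover have "2^k / sqrt 2 * (y * f (y^2/2)) = y^(2*k+1) / sqrt (2 - y^2)" if "y \<in> {0..1}" for y :: real
  proof -
    have y2: "y^2 \<le> 1" using that by (auto simp: power_le_one)
    have "sqrt (1 - y^2/2) = sqrt (2 - y^2) / sqrt 2"
      by (simp add: real_sqrt_divide[symmetric] field_simps)
    moreover have "(y^2/2)^k = y^(2*k) / 2^k" by (simp add: power_divide power_mult)
    moreover have "sqrt (2 - y^2) > 0" using y2 by simp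
    moreover have "y^(2*k+1) = y * y^(2*k)" by simp
    ultimately show ?thesis unfolding f_def by (simp add: field_simps)
  qed
  ultimately show ?thesis by (rule has_integral_eq[rotated])
qed

lemma asin_deriv: assumes y: "0 < y" "y < (1::real)"
  shows "((\<lambda>y. arcsin (1 - y^2)) has_real_derivative (- 2 / sqrt (2 - y^2))) (at y)"
proof -
  have y2: "0 < y^2" "y^2 < 1" using y by (auto simp: abs_square_less_1)
  have a: "((\<lambda>y. 1 - y^2) has_real_derivative (- (2*y))) (at y)"
    using DERIV_diff[OF DERIV_const DERIV_pow[of 2 y UNIV]] by simp
  have b: "(arcsin has_real_derivative inverse (sqrt (1 - (1 - y^2)^2))) (at (1 - y^2))"
    by (rule DERIV_arcsin) (use y2 in auto)
  have c: "((\<lambda>y. arcsin (1 - y^2)) has_real_derivative (inverse (sqrt (1 - (1 - y^2)^2)) * (- (2*y)))) (at y)"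
    by (rule DERIV_chain2[OF b a])
  have "1 - (1 - y^2)^2 = y^2 * (2 - y^2)" by (simp add: algebra_simps power2_eq_square)
  hence "sqrt (1 - (1 - y^2)^2) = y * sqrt (2 - y^2)" using y by (simp add: real_sqrt_mult)
  moreover have "sqrt (2 - y^2) > 0" using y2 by simp
  ultimately have "inverse (sqrt (1 - (1 - y^2)^2)) * (- (2*y)) = - 2 / sqrt (2 - y^2)"
    using y by (simp add: field_simps)
  with c show ?thesis by (simp only:)
qed

lemma sq_le2: "0 \<le> x \<Longrightarrow> x \<le> 1 \<Longrightarrow> x^2 \<le> (2::real)"
  using power_le_one[of x 2] by simp

lemma Lk_int: "((\<lambda>y::real. y^(2*k) * arcsin (1 - y^2)) has_integral (sqrt 2 * 2^k * calB k / (2*k+1))) {0..1}"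
proof -
  define F where "F = (\<lambda>y::real. y^(2*k+1) * arcsin (1 - y^2) / (2*k+1))"
  define F' where "F' = (\<lambda>y::real. y^(2*k) * arcsin (1 - y^2) - 2 / (2*k+1) * (y^(2*k+1) / sqrt (2 - y^2)))"
  have cF: "continuous_on {0..1} F" unfolding F_def
    by (intro continuous_intros) (auto simp: power_le_one sq_le2)
  have dF: "(F has_real_derivative F' y) (at y)" if "y \<in> {0<..<1}" for y
  proof -
    from that have y: "0 < y" "y < 1" by auto
    have "(F has_real_derivative ((real (2*k+1) * y^(2*k)) * arcsin (1 - y^2) + (- 2 / sqrt (2 - y^2)) * y^(2*k+1)) / (2*k+1)) (at y)"
      unfolding F_def
      by (rule DERIV_cdivide[OF DERIV_mult[OF _ asin_deriv[OF y]]])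
         (use DERIV_pow[of "2*k+1" y UNIV] in simp)
    moreover have "((real (2*k+1) * y^(2*k)) * arcsin (1 - y^2) + (- 2 / sqrt (2 - y^2)) * y^(2*k+1)) / (2*k+1) = F' y"
    proof -
      have q: "sqrt (2 - y^2) > 0" using y power_le_one[of y 2] by simp
      have k: "real (2*k+1) > 0" by simp
      show ?thesis unfolding F'_def using q k by (simp add: divide_simps)
    qed
    ultimately show ?thesis by simp
  qed
  have I: "(F' has_integral (F 1 - F 0)) {0..1}"
    by (rule fundamental_theorem_of_calculus_interior)
       (use cF dF in \<open>auto simp: has_real_derivative_iff_has_vector_derivative\<close>)
  have F10: "F 1 - F 0 = 0" by (simp add: F_def)
  have M: "((\<lambda>y. 2 / (2*k+1) * (y^(2*k+1) / sqrt (2 - y^2))) has_integral (2 / (2*k+1) * (2^k / sqrt 2 * calB k))) {0..1::real}"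
    by (rule has_integral_mult_right[OF Mk_int])
  have "((\<lambda>y. F' y + 2 / (2*k+1) * (y^(2*k+1) / sqrt (2 - y^2))) has_integral (0 + 2 / (2*k+1) * (2^k / sqrt 2 * calB k))) {0..1::real}"
    using has_integral_add[OF I M] F10 by simp
  moreover have "(\<lambda>y. F' y + 2 / (2*k+1) * (y^(2*k+1) / sqrt (2 - y^2))) = (\<lambda>y. y^(2*k) * arcsin (1 - y^2))"
    unfolding F'_def by auto
  moreover have "0 + 2 / (2*k+1) * (2^k / sqrt 2 * calB k) = sqrt 2 * 2^k * calB k / (2*k+1)"
  proof -
    have "2 / sqrt 2 = sqrt 2" by (metis real_div_sqrt zero_le_numeral)
    hence "2 / (2*k+1) * (2^k / sqrt 2 * calB k) = (2 / sqrt 2) * 2^k * calB k / (2*k+1)" by (simp add: field_simps)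
    thus ?thesis using \<open>2 / sqrt 2 = sqrt 2\<close> by simp
  qed
  ultimately show ?thesis by simp
qed

definition F2 :: "nat \<Rightarrow> real \<Rightarrow> real" where
  "F2 r y = 1 / (8 * 4^r) * ((2 * (1 - y^2)^(r+1) - (1 - y^2)^(r-1)) * arcsin (1 - y^2)
             + (1 - y^2)^r * sqrt (1 - (1 - y^2)^2))"

lemma pointwise: assumes r: "r \<ge> 1" and y: "0 < y" "y < 1"
  shows "(\<lambda>m. hh r m y) sums F2 r y"
proof -
  define s where "s = 1 - y^2"
  have y2: "y^2 < 1" using y by (simp add: abs_square_less_1)
  have y3: "0 < y^2" using y by simp
  have s: "0 < s" "s < 1" using y2 y3 by (auto simp: s_def)
  have "(\<lambda>m. s^r / 4^r * (ca m * s^(2*m+2) / (2*(2*m+1)*(2*m+3)))) sums (s^r / 4^r * Pcf s)"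
    by (intro sums_mult P_series s)
  moreover have "s^r / 4^r * (ca m * s^(2*m+2) / (2*(2*m+1)*(2*m+3))) = hh r m y" for m
  proof -
    have "s^(2*m+2+r) = s^(2*m+2) * s^r" by (simp add: power_add)
    thus ?thesis unfolding hh_def s_def[symmetric] by (simp add: field_simps power_add)
  qed
  moreover have "s^r / 4^r * Pcf s = F2 r y"
  proof -
    obtain r' where r': "r = Suc r'" using r by (cases r) auto
    have e: "s^r = s * s^r'" "s^(r+1) = s * s * s^r'" "s^(r-1) = s^r'" unfolding r' by simp_all
    show ?thesis unfolding F2_def s_def[symmetric] Pcf_def e using s
      by (simp add: divide_simps) (simp add: algebra_simps power2_eq_square)
  qed
  ultimately show ?thesis by simp
qed

definition Kv :: "nat \<Rightarrow> real" where
  "Kv m = sqrt 2 * (\<Sum>k=0..m. real (m choose k) * (-1)^k * 2^k * calB k / (2*k+1))"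

lemma K_int: "((\<lambda>y::real. (1 - y^2)^m * arcsin (1 - y^2)) has_integral Kv m) {0..1}"
proof -
  define c where "c k = real (m choose k) * (-1)^k" for k
  have exp: "(1 - y^2)^m = (\<Sum>k=0..m. c k * y^(2*k))" for y :: real
  proof -
    have e0: "(1 - y^2) = (-(y^2) + 1)" by simp
    have "(-(y^2) + 1)^m = (\<Sum>k\<le>m. of_nat (m choose k) * (-(y^2))^k * 1^(m-k))" by (rule binomial_ring)
    also have "\<dots> = (\<Sum>k=0..m. c k * y^(2*k))"
      unfolding atLeast0AtMost[symmetric] c_def
    proof (intro sum.cong refl)
      fix k
      have "(-(y^2))^k = (-1)^k * y^(2*k)" using power_minus[of "y^2" k] power_mult[of y 2 k] by simp
      thus "of_nat (m choose k) * (-(y^2))^k * 1^(m-k) = real (m choose k) * (-1)^k * y^(2*k)" by simp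
    qed
    finally have "(-(y^2) + 1)^m = (\<Sum>k=0..m. c k * y^(2*k))" .
    thus ?thesis unfolding e0 .
  qed
  have "((\<lambda>y. \<Sum>k=0..m. c k * (y^(2*k) * arcsin (1 - y^2))) has_integral
         (\<Sum>k=0..m. c k * (sqrt 2 * 2^k * calB k / (2*k+1)))) {0..1::real}"
    by (intro has_integral_sum has_integral_mult_right Lk_int) auto
  moreover have "(\<lambda>y. \<Sum>k=0..m. c k * (y^(2*k) * arcsin (1 - y^2))) = (\<lambda>y::real. (1 - y^2)^m * arcsin (1 - y^2))"
    unfolding exp sum_distrib_right by (simp add: mult.assoc)
  moreover have "(\<Sum>k=0..m. c k * (sqrt 2 * 2^k * calB k / (2*k+1))) = Kv m"
    unfolding Kv_def c_def sum_distrib_left by (intro sum.cong refl) (simp add: field_simps)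
  ultimately show ?thesis by simp
qed

lemma V_int: "((\<lambda>y::real. (1 - y^2)^r * sqrt (1 - (1 - y^2)^2)) has_integral varphi (2*r+1)) {0..1}"
proof -
  define f where "f = (\<lambda>u::real. u^r * sqrt (1 + u))"
  have cf: "continuous_on {0..1} f" unfolding f_def by (intro continuous_intros)
  have S1: "((\<lambda>x. (- 2 * x) *\<^sub>R f (1 - x^2)) has_integral
      (integral {1 - 0^2..1 - 1^2} f - integral {1 - 1^2..1 - 0^2} f)) {0..1::real}"
  proof (rule has_integral_substitution_general[where s="{}" and c=0 and d=1])
    show "(\<lambda>x::real. 1 - x^2) ` {0..1} \<subseteq> {0..1}" by (auto simp: power_le_one)
    show "continuous_on {0..1} f" by (rule cf)
    show "continuous_on {0..1} (\<lambda>x::real. 1 - x^2)" by (intro continuous_intros)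
    fix x :: real
    show "((\<lambda>x. 1 - x^2) has_real_derivative (- 2 * x)) (at x within {0..1})"
      using DERIV_diff[OF DERIV_const DERIV_pow[of 2 x "{0..1}"]] by simp
  qed auto
  hence S1': "((\<lambda>x. (- 1/2) * ((- 2 * x) * f (1 - x^2))) has_integral ((- 1/2) * (- integral {0..1} f))) {0..1::real}"
    by (intro has_integral_mult_right) simp
  have S2: "((\<lambda>t. (2 * t) *\<^sub>R f (t^2)) has_integral integral {0^2..1^2} f) {0..1::real}"
  proof (rule has_integral_substitution[where c=0 and d=1])
    show "(\<lambda>x::real. x^2) ` {0..1} \<subseteq> {0..1}" by (auto simp: power_le_one)
    show "continuous_on {0..1} f" by (rule cf)
    fix x :: real
    show "((\<lambda>x. x^2) has_real_derivative (2 * x)) (at x within {0..1})"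
      using DERIV_pow[of 2 x "{0..1}"] by simp
  qed auto
  hence S2': "((\<lambda>t. 1/2 * ((2 * t) * f (t^2))) has_integral (1/2 * integral {0..1} f)) {0..1::real}"
    by (intro has_integral_mult_right) simp
  have "((\<lambda>t. t^(2*r+1) * sqrt (1 + t^2)) has_integral (1/2 * integral {0..1} f)) {0..1::real}"
    using S2' by (rule has_integral_eq[rotated]) (simp add: f_def power_mult[symmetric] field_simps)
  hence vp: "varphi (2*r+1) = 1/2 * integral {0..1} f"
    unfolding varphi_def by (rule integral_unique)
  have "((\<lambda>y::real. (1 - y^2)^r * sqrt (1 - (1 - y^2)^2)) has_integral ((- 1/2) * (- integral {0..1} f))) {0..1}"
  proof (rule has_integral_eq[rotated, OF S1'])
    fix x :: real assume x: "x \<in> {0..1}"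
    have "1 - (1 - x^2)^2 = x^2 * (2 - x^2)" by (simp add: algebra_simps power2_eq_square)
    hence "sqrt (1 - (1 - x^2)^2) = x * sqrt (2 - x^2)" using x by (simp add: real_sqrt_mult)
    moreover have "1 + (1 - x^2) = 2 - x^2" by simp
    ultimately show "(- 1/2) * ((- 2 * x) * f (1 - x^2)) = (1 - x^2)^r * sqrt (1 - (1 - x^2)^2)"
      unfolding f_def by simp
  qed
  thus ?thesis unfolding vp by simp
qed

lemma F2_int: assumes "r \<ge> 1"
  shows "((F2 r) has_integral (1 / (8 * 4^r) * (2 * Kv (r+1) - Kv (r-1) + varphi (2*r+1)))) {0..1}"
proof -
  have "((\<lambda>y::real. 1 / (8 * 4^r) * (2 * ((1 - y^2)^(r+1) * arcsin (1 - y^2)) - (1 - y^2)^(r-1) * arcsin (1 - y^2)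
          + (1 - y^2)^r * sqrt (1 - (1 - y^2)^2))) has_integral
        (1 / (8 * 4^r) * (2 * Kv (r+1) - Kv (r-1) + varphi (2*r+1)))) {0..1}"
    by (intro has_integral_mult_right has_integral_add has_integral_diff K_int V_int)
  moreover have "(\<lambda>y::real. 1 / (8 * 4^r) * (2 * ((1 - y^2)^(r+1) * arcsin (1 - y^2)) - (1 - y^2)^(r-1) * arcsin (1 - y^2)
          + (1 - y^2)^r * sqrt (1 - (1 - y^2)^2))) = F2 r"
    by (rule ext) (simp add: F2_def algebra_simps)
  ultimately show ?thesis by simp
qed

lemma pow_split: assumes "k \<le> 2*r" shows "(2::real)^(2*r-k+1) = 2 * 4^r / 2^k"
proof -
  have "(2::real)^(2*r-k+1) * 2^k = 2^(2*r-k+1+k)" by (simp add: power_add)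
  also have "2*r-k+1+k = 2*r+1" using assms by simp
  also have "(2::real)^(2*r+1) = 2 * 4^r" by (simp add: power_mult)
  finally show ?thesis by (simp add: field_simps)
qed

lemma final_eq: assumes r: "r \<ge> 1"
  shows "1 / (8 * 4^r) * (2 * Kv (r+1) - Kv (r-1) + varphi (2*r+1)) =
         sqrt 2 / 2 * (\<Sum>k=0..r+1. (-1)^k / ((2 * real k + 1) * 2 ^ (2*r - k + 1))
                                      * real ((r+1) choose k) * calB k)
          + varphi (2*r+1) / 2 ^ (2*r+3)
          - 1 / 2 powr (3/2) * (\<Sum>k=0..r-1. (-1)^k / ((2 * real k + 1) * 2 ^ (2*r - k + 1))
                                      * real ((r-1) choose k) * calB k)"
proof -
  have s2: "sqrt 2 * sqrt 2 = (2::real)" by simp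
  have s2p: "sqrt (2::real) > 0" by simp
  have q: "(4::real)^r > 0" by simp
  have p32: "(2::real) powr (3/2) = 2 * sqrt 2"
  proof -
    have "(2::real) powr (3/2) = 2 powr (1 + 1/2)" by simp
    also have "\<dots> = 2 powr 1 * 2 powr (1/2)" by (rule powr_add)
    also have "\<dots> = 2 * sqrt 2" by (simp add: powr_half_sqrt)
    finally show ?thesis .
  qed
  have A: "1 / (8 * 4^r) * (2 * Kv (r+1)) = sqrt 2 / 2 * (\<Sum>k=0..r+1. (-1)^k / ((2 * real k + 1) * 2 ^ (2*r - k + 1))
                                      * real ((r+1) choose k) * calB k)"
    unfolding Kv_def sum_distrib_left
  proof (intro sum.cong refl)
    fix k assume "k \<in> {0..r+1}"
    hence "k \<le> 2*r" using r by simp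
    note ps = pow_split[OF this]
    show "1 / (8 * 4^r) * (2 * (sqrt 2 * (real ((r+1) choose k) * (-1)^k * 2^k * calB k / (2*k+1)))) =
          sqrt 2 / 2 * ((-1)^k / ((2 * real k + 1) * 2 ^ (2*r - k + 1)) * real ((r+1) choose k) * calB k)"
      unfolding ps using q by (simp add: field_simps)
  qed
  have e2: "1 / (2 * sqrt 2) = sqrt 2 / (4::real)" using s2 s2p by (simp add: field_simps)
  have B: "1 / (8 * 4^r) * Kv (r-1) = 1 / 2 powr (3/2) * (\<Sum>k=0..r-1. (-1)^k / ((2 * real k + 1) * 2 ^ (2*r - k + 1))
                                      * real ((r-1) choose k) * calB k)"
    unfolding Kv_def sum_distrib_left p32 e2
  proof (intro sum.cong refl)
    fix k assume "k \<in> {0..r-1}"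
    hence "k \<le> 2*r" using r by simp
    note ps = pow_split[OF this]
    show "1 / (8 * 4^r) * (sqrt 2 * (real ((r-1) choose k) * (-1)^k * 2^k * calB k / (2*k+1))) =
          sqrt 2 / 4 * ((-1)^k / ((2 * real k + 1) * 2 ^ (2*r - k + 1)) * real ((r-1) choose k) * calB k)"
      unfolding ps using q by (simp add: field_simps)
  qed
  have C: "1 / (8 * 4^r) * varphi (2*r+1) = varphi (2*r+1) / 2 ^ (2*r+3)"
  proof -
    have "(2::real)^(2*r+3) = 8 * 4^r" by (simp add: power_add power_mult)
    thus ?thesis by simp
  qed
  show ?thesis unfolding A[symmetric] B[symmetric] C[symmetric] by (simp add: algebra_simps)
qed

theorem theorem3p0p5:
  fixes r :: nat
  assumes "r \<ge> 1"
  shows "(\<lambda>m. let n = m + 1 in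
            (real n * 4 ^ n / ((2 * real n - 1)^2 * (2 * real n + 1) * (4 * real n + 2 * real r + 1)))
            * (real ((2*n) choose n) / real ((4*n + 2*r) choose (2*n + r))))
         sums
         (sqrt 2 / 2 * (\<Sum>k=0..r+1. (-1)^k / ((2 * real k + 1) * 2 ^ (2*r - k + 1))
                                      * real ((r+1) choose k) * calB k)
          + varphi (2*r+1) / 2 ^ (2*r+3)
          - 1 / 2 powr (3/2) * (\<Sum>k=0..r-1. (-1)^k / ((2 * real k + 1) * 2 ^ (2*r - k + 1))
                                      * real ((r-1) choose k) * calB k))"
proof -
  have "(tt r) sums (1 / (8 * 4^r) * (2 * Kv (r+1) - Kv (r-1) + varphi (2*r+1)))"
    by (rule interchange[OF F2_int[OF assms] pointwise[OF assms]])
  moreover have "tt r = (\<lambda>m. let n = m + 1 in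
            (real n * 4 ^ n / ((2 * real n - 1)^2 * (2 * real n + 1) * (4 * real n + 2 * real r + 1)))
            * (real ((2*n) choose n) / real ((4*n + 2*r) choose (2*n + r))))"
    by (rule ext) (simp only: tt_def)
  ultimately show ?thesis unfolding final_eq[OF assms] by simp
qed

end
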